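(* Let $\mu$ be a probability measure on $\mathbb{R}^K$ with density $m$ with respect to Lebesgue measure, and let $\gamma(dx)=q(x)dx$ be a probability measure on $\mathbb{R}^K$ such that $\gamma$ satisfies a logarithmic Sobolev inequality with constant $\alpha>0$ and there is $\kappa\ge1$ with $m(x)\le\kappa q(x)$ for all $x\in\mathbb{R}^K$. Then for every Lipschitz continuous $F:\mathbb{R}^K\to\mathbb{R}$ with $|\nabla F|_\infty\le1$ and $Y\sim\mu$, $$\forall r>0,\quad \mathbb{P}_\mu\left[F(Y)-\mu(F)\ge r+W_1(\mu,\gamma)\right]\le\kappa e^{-\frac{r^2}{\alpha}}.$$
   Context: $\gamma$ satisfies a logarithmic Sobolev inequality with constant $\alpha$ if for all $f\in H^1(d\gamma)=\{g\in L^2(d\gamma):\int|\nabla g|^2d\gamma<\infty\}$ with $f\ge0$, $\mathrm{Ent}_\gamma(f^2)\le\alpha\int|\nabla f|^2d\gamma$, where $\mathrm{Ent}_\gamma(\phi)=\int\phi\log\phi\,d\gamma-(\int\phi\,d\gamma)\log(\int\phi\,d\gamma)$. $|\nabla F|_\infty$ is the essential supremum of the Euclidean norm of the a.e.-defined gradient. $\mu(F)=\int F\,d\mu$. $W_1(\mu,\gamma)=\sup_{|\nabla F|_\infty\le1}|\mu(F)-\gamma(F)|$. *)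

theory Defs
  imports "HOL-Probability.Probability"
begin

definition test_fun :: "('a::euclidean_space \<Rightarrow> real) \<Rightarrow> ('a \<Rightarrow> 'a) \<Rightarrow> bool" where
  "test_fun \<phi> d\<phi> \<longleftrightarrow>
     (\<forall>x. (\<phi> has_derivative (\<lambda>h. d\<phi> x \<bullet> h)) (at x)) \<and>
     continuous_on UNIV d\<phi> \<and> bounded {x. \<phi> x \<noteq> 0}"

definition weak_gradient :: "('a::euclidean_space \<Rightarrow> real) \<Rightarrow> ('a \<Rightarrow> 'a) \<Rightarrow> bool" where
  "weak_gradient f g \<longleftrightarrow>
     f \<in> borel_measurable borel \<and> g \<in> borel_measurable borel \<and>
     (\<forall>K. compact K \<longrightarrow> set_integrable lborel K f \<and> set_integrable lborel K g) \<and>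
     (\<forall>\<phi> d\<phi>. test_fun \<phi> d\<phi> \<longrightarrow>
        (\<forall>i\<in>Basis. (\<integral>x. f x * (d\<phi> x \<bullet> i) \<partial>lborel) = - (\<integral>x. (g x \<bullet> i) * \<phi> x \<partial>lborel)))"

definition Ent :: "'a measure \<Rightarrow> ('a \<Rightarrow> real) \<Rightarrow> real" where
  "Ent \<gamma> \<phi> = (\<integral>x. \<phi> x * ln (\<phi> x) \<partial>\<gamma>) - (\<integral>x. \<phi> x \<partial>\<gamma>) * ln (\<integral>x. \<phi> x \<partial>\<gamma>)"

text \<open>The entropy is required
  to be finite (the entropy of f^2 is always well defined in (-inf,+inf]).\<close>
definition LSI :: "'a::euclidean_space measure \<Rightarrow> real \<Rightarrow> bool" where
  "LSI \<gamma> \<alpha> \<longleftrightarrow>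
     (\<forall>f g. (\<forall>x. f x \<ge> 0) \<longrightarrow> weak_gradient f g \<longrightarrow>
        integrable \<gamma> (\<lambda>x. (f x)\<^sup>2) \<longrightarrow> integrable \<gamma> (\<lambda>x. (norm (g x))\<^sup>2) \<longrightarrow>
        integrable \<gamma> (\<lambda>x. (f x)\<^sup>2 * ln ((f x)\<^sup>2)) \<and>
        Ent \<gamma> (\<lambda>x. (f x)\<^sup>2) \<le> \<alpha> * (\<integral>x. (norm (g x))\<^sup>2 \<partial>\<gamma>))"

text \<open>F is Lipschitz and |grad F|_infty \<le> c (essential sup of the norm of the a.e. gradient).\<close>
definition lip_grad_le :: "('a::euclidean_space \<Rightarrow> real) \<Rightarrow> real \<Rightarrow> bool" where
  "lip_grad_le F c \<longleftrightarrow> (\<exists>L. L-lipschitz_on UNIV F) \<and>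
     (AE x in lborel. F differentiable (at x) \<and> onorm (frechet_derivative F (at x)) \<le> c)"

definition W1 :: "'a::euclidean_space measure \<Rightarrow> 'a measure \<Rightarrow> ereal" where
  "W1 \<mu> \<gamma> = (SUP F \<in> {F. lip_grad_le F 1}.
      (if integrable \<mu> F \<and> integrable \<gamma> F
       then ereal \<bar>(\<integral>x. F x \<partial>\<mu>) - (\<integral>x. F x \<partial>\<gamma>)\<bar> else \<infinity>))"

end

theory Submission
  imports Defs
begin


lemma exp_diff_le: fixes u v :: real shows "\<bar>exp u - exp v\<bar> \<le> exp (max u v) * \<bar>u - v\<bar>"
proof -
  have key: "exp a - exp b \<le> exp a * (a - b)" if "b \<le> a" for a b :: real
  proof -
    have "1 - (a - b) \<le> exp (-(a - b))" using exp_ge_add_one_self[of "-(a-b)"] by linarith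
    then have "1 - exp (b - a) \<le> a - b" by simp
    then have "exp a * (1 - exp (b - a)) \<le> exp a * (a - b)" by (intro mult_left_mono) auto
    moreover have "exp a * (1 - exp (b - a)) = exp a - exp b"
      by (simp add: algebra_simps exp_diff)
    ultimately show ?thesis by simp
  qed
  show ?thesis
  proof (cases "v \<le> u")
    case True
    then show ?thesis using key[of v u, OF True] by (simp add: max_def)
  next
    case False
    then show ?thesis using key[of u v] by (simp add: max_def abs_minus_commute)
  qed
qed

lemma arctan_lip: "\<bar>arctan a - arctan b\<bar> \<le> \<bar>a - b\<bar>"
proof -
  have "norm (arctan a - arctan b) \<le> 1 * norm (a - b)"
  proof (rule differentiable_bound[where S=UNIV and f'="\<lambda>x h. inverse (1 + x\<^sup>2) * h"])
    show "((arctan has_derivative (\<lambda>h. inverse (1 + x\<^sup>2) * h)) (at x within UNIV))" for x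
      using DERIV_arctan[of x] by (simp add: has_field_derivative_def mult.commute[of _ "inverse _"])
    show "onorm (\<lambda>h. inverse (1 + x\<^sup>2) * h) \<le> 1" for x :: real
    proof -
      have "onorm (\<lambda>h. inverse (1 + x\<^sup>2) * h) = \<bar>inverse (1 + x\<^sup>2)\<bar>"
        proof -
        have e: "(\<lambda>h. inverse (1 + x\<^sup>2) * h) = (\<lambda>h. inverse (1 + x\<^sup>2) *\<^sub>R h)" by simp
        have o: "onorm (\<lambda>h::real. inverse (1 + x\<^sup>2) *\<^sub>R h) = \<bar>inverse (1 + x\<^sup>2)\<bar> * onorm (\<lambda>h::real. h)"
          by (rule onorm_scaleR[of "\<lambda>h. h", OF bounded_linear_ident])
        show ?thesis unfolding e o onorm_id by simp
      qed
      also have "\<dots> \<le> 1" by (simp add: inverse_le_1_iff add_pos_nonneg)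
      finally show ?thesis .
    qed
  qed auto
  then show ?thesis by simp
qed

lemma abs_arctan_le: "\<bar>arctan a\<bar> \<le> \<bar>a\<bar>"
  using arctan_lip[of a 0] by simp

lemma quot_seq:
  fixes f :: "real \<Rightarrow> real"
  assumes "(f has_real_derivative D) (at x)" "s \<longlonglongrightarrow> 0" "\<And>n. s n \<noteq> 0"
  shows "(\<lambda>n. (f (x + s n) - f x) / s n) \<longlonglongrightarrow> D"
proof -
  have "((\<lambda>y. (f y - f x) / (y - x)) \<longlongrightarrow> D) (at x)"
    using assms(1) has_field_derivative_iff by blast
  moreover have "(\<lambda>n. x + s n) \<longlonglongrightarrow> x" using tendsto_add[OF tendsto_const assms(2)] by simp
  ultimately have "((\<lambda>y. (f y - f x) / (y - x)) \<circ> (\<lambda>n. x + s n)) \<longlonglongrightarrow> D"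
    using assms(3) unfolding tendsto_at_iff_sequentially by auto
  then show ?thesis by (simp add: comp_def)
qed

lemma dir_quot:
  fixes F :: "'a::real_normed_vector \<Rightarrow> real"
  assumes "(F has_derivative D) (at x)" "s \<longlonglongrightarrow> 0" "\<And>n. s n \<noteq> 0"
  shows "(\<lambda>n. (F (x + s n *\<^sub>R v) - F x) / s n) \<longlonglongrightarrow> D v"
proof -
  have lin: "linear D" using assms(1) has_derivative_linear by blast
  have "((\<lambda>t. x + t *\<^sub>R v) has_derivative (\<lambda>t. t *\<^sub>R v)) (at 0)"
    by (auto intro!: derivative_eq_intros)
  then have "((\<lambda>t. F (x + t *\<^sub>R v)) has_derivative (\<lambda>t. D (t *\<^sub>R v))) (at 0)"
    using has_derivative_compose[of "\<lambda>t. x + t *\<^sub>R v" _ 0 UNIV F D] assms(1) by (simp add: comp_def)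
  then have "((\<lambda>t. F (x + t *\<^sub>R v)) has_real_derivative D v) (at 0)"
    unfolding has_field_derivative_def linear.scaleR[OF lin] real_scaleR_def
    by (simp add: mult.commute[of _ "D v"])
  from quot_seq[OF this assms(2,3)] show ?thesis by simp
qed



lemma lip_cont:
  fixes f :: "'a::real_normed_vector \<Rightarrow> real"
  assumes "L \<ge> 0" "\<forall>x y. \<bar>f x - f y\<bar> \<le> L * norm (x - y)"
  shows "continuous_on UNIV f"
proof -
  have "L-lipschitz_on UNIV f" using assms unfolding lipschitz_on_def by (simp add: dist_norm dist_real_def)
  then show ?thesis by (rule lipschitz_on_continuous_on)
qed

lemma test_fun_facts:
  fixes \<phi> :: "'a::euclidean_space \<Rightarrow> real"
  assumes "test_fun \<phi> d\<phi>"
  obtains R M where "R \<ge> 0" "M \<ge> 0" "\<And>x. norm x > R \<Longrightarrow> \<phi> x = 0" "\<And>x. norm (d\<phi> x) \<le> M"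
    "\<And>x y. \<bar>\<phi> x - \<phi> y\<bar> \<le> M * norm (x - y)" "continuous_on UNIV \<phi>"
    "continuous_on UNIV d\<phi>" "\<And>x. (\<phi> has_derivative (\<lambda>h. d\<phi> x \<bullet> h)) (at x)"
proof -
  have der: "\<And>x. (\<phi> has_derivative (\<lambda>h. d\<phi> x \<bullet> h)) (at x)" and cd: "continuous_on UNIV d\<phi>"
    and bd: "bounded {x. \<phi> x \<noteq> 0}"
    using assms unfolding test_fun_def by auto
  obtain R0 where R0: "\<And>x. \<phi> x \<noteq> 0 \<Longrightarrow> norm x \<le> R0" using bd unfolding bounded_iff by auto
  define R where "R = max R0 0"
  have R: "\<And>x. norm x > R \<Longrightarrow> \<phi> x = 0" using R0 unfolding R_def by force
  have d0: "d\<phi> x = 0" if "norm x > R" for x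
  proof -
    have op: "open {y::'a. R < norm y}" by (intro open_Collect_less continuous_intros)
    have "((\<lambda>_. 0::real) has_derivative (\<lambda>h. 0)) (at x)" by simp
    then have "(\<phi> has_derivative (\<lambda>h. 0)) (at x)"
      by (rule has_derivative_transform_within_open[OF _ op]) (use that R in auto)
    from has_derivative_unique[OF der[of x] this] have "(\<lambda>h. d\<phi> x \<bullet> h) = (\<lambda>h. 0)" .
    then have "d\<phi> x \<bullet> d\<phi> x = 0" by metis
    then show ?thesis by simp
  qed
  have "compact (d\<phi> ` cball 0 R)"
    by (intro compact_continuous_image continuous_on_subset[OF cd]) auto
  then obtain M0 where M0: "\<And>y. y \<in> d\<phi> ` cball 0 R \<Longrightarrow> norm y \<le> M0"
    using compact_imp_bounded bounded_iff by metis
  define M where "M = max M0 0"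
  have M: "norm (d\<phi> x) \<le> M" for x
  proof (cases "norm x \<le> R")
    case True then show ?thesis using M0[of "d\<phi> x"] unfolding M_def by auto
  next
    case False then show ?thesis using d0[of x] unfolding M_def by auto
  qed
  have lip: "\<bar>\<phi> x - \<phi> y\<bar> \<le> M * norm (x - y)" for x y
  proof -
    have "norm (\<phi> x - \<phi> y) \<le> M * norm (x - y)"
    proof (rule differentiable_bound[where S=UNIV and f'="\<lambda>x h. d\<phi> x \<bullet> h"])
      show "(\<phi> has_derivative (\<lambda>h. d\<phi> z \<bullet> h)) (at z within UNIV)" for z using der by simp
      show "onorm (\<lambda>h. d\<phi> z \<bullet> h) \<le> M" for z
      proof (rule onorm_le)
        fix h show "norm (d\<phi> z \<bullet> h) \<le> M * norm h"
          using Cauchy_Schwarz_ineq2[of "d\<phi> z" h] M[of z]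
          by (simp add: mult_right_mono order_trans)
      qed
    qed auto
    then show ?thesis by simp
  qed
  have cphi: "continuous_on UNIV \<phi>"
    by (rule lip_cont[of M]) (use lip M_def in auto)
  show ?thesis
    by (rule that[of R M]) (use R M lip cphi cd der R_def M_def in auto)
qed

lemma integrable_cball:
  fixes h :: "'a::euclidean_space \<Rightarrow> real"
  assumes "h \<in> borel_measurable borel" "K \<ge> 0" "\<And>x. \<bar>h x\<bar> \<le> K * indicator (cball 0 R) x"
  shows "integrable lborel h"
proof (rule Bochner_Integration.integrable_bound[where M=lborel and f="\<lambda>x. K * indicator (cball 0 R) x"])
  show "integrable lborel (\<lambda>x. K * indicator (cball 0 R) x :: real)"
    by (intro integrable_mult_right integrable_real_indicator emeasure_bounded_finite) auto
  show "AE x in lborel. norm (h x) \<le> norm (K * indicator (cball 0 R) x :: real)"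
    using assms(2,3) by (auto simp: indicator_def)
qed (use assms in auto)

lemma lborel_translate:
  fixes h :: "'a::euclidean_space \<Rightarrow> real"
  assumes [measurable]: "h \<in> borel_measurable borel"
  shows "(\<integral>x. h (x + c) \<partial>lborel) = (\<integral>x. h x \<partial>lborel)"
proof -
  have "(\<integral>x. h x \<partial>lborel) = (\<integral>x. h x \<partial>distr lborel borel ((+) c))"
    by (simp add: lborel_distr_plus)
  also have "\<dots> = (\<integral>x. h (c + x) \<partial>lborel)"
    by (rule integral_distr) auto
  finally show ?thesis by (simp add: add.commute)
qed



lemma weak_gradient_lip:
  fixes f :: "'a::euclidean_space \<Rightarrow> real" and g :: "'a \<Rightarrow> 'a"
  assumes L: "L \<ge> 0" and lip: "\<And>x y. \<bar>f x - f y\<bar> \<le> L * norm (x - y)"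
    and gm[measurable]: "g \<in> borel_measurable borel"
    and gb: "\<And>x. norm (g x) \<le> C"
    and der: "AE x in lborel. (f has_derivative (\<lambda>h. g x \<bullet> h)) (at x)"
  shows "weak_gradient f g"
proof -
  have cf: "continuous_on UNIV f" by (rule lip_cont[OF L]) (use lip in auto)
  have fm[measurable]: "f \<in> borel_measurable borel" by (rule borel_measurable_continuous_onI[OF cf])
  have C0: "C \<ge> 0" using gb[of 0] norm_ge_zero order_trans by blast
  have loc: "set_integrable lborel K f \<and> set_integrable lborel K g" if K: "compact K" for K
  proof
    show "set_integrable lborel K f" unfolding set_integrable_def
      by (rule borel_integrable_compact[OF K continuous_on_subset[OF cf]]) auto
    have Km[measurable]: "K \<in> sets borel" using K by (rule borel_compact)
    show "set_integrable lborel K g" unfolding set_integrable_def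
    proof (rule Bochner_Integration.integrable_bound[where M=lborel and f="\<lambda>x. C * indicator K x"])
      show "integrable lborel (\<lambda>x. C * indicator K x :: real)"
        by (intro integrable_mult_right integrable_real_indicator emeasure_bounded_finite compact_imp_bounded K)
           (use Km in auto)
      show "AE x in lborel. norm (indicator K x *\<^sub>R g x) \<le> norm (C * indicator K x :: real)"
        using gb C0 by (auto simp: indicator_def)
    qed auto
  qed
  have ibp: "(\<integral>x. f x * (d\<phi> x \<bullet> i) \<partial>lborel) = - (\<integral>x. (g x \<bullet> i) * \<phi> x \<partial>lborel)"
    if tf: "test_fun \<phi> d\<phi>" and i: "i \<in> Basis" for \<phi> d\<phi> i
  proof -
    obtain R M where R: "R \<ge> 0" and M: "M \<ge> 0" and Rz: "\<And>x. norm x > R \<Longrightarrow> \<phi> x = 0"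
      and Md: "\<And>x. norm (d\<phi> x) \<le> M" and Ml: "\<And>x y. \<bar>\<phi> x - \<phi> y\<bar> \<le> M * norm (x - y)"
      and cphi: "continuous_on UNIV \<phi>" and cd: "continuous_on UNIV d\<phi>"
      and dphi: "\<And>x. (\<phi> has_derivative (\<lambda>h. d\<phi> x \<bullet> h)) (at x)"
      using test_fun_facts[OF tf] by blast
    have phim[measurable]: "\<phi> \<in> borel_measurable borel" by (rule borel_measurable_continuous_onI[OF cphi])
    have dphim[measurable]: "d\<phi> \<in> borel_measurable borel" by (rule borel_measurable_continuous_onI[OF cd])
    have ni: "norm i = 1" using i by auto
    have "compact (f ` cball 0 (R + 2))" by (intro compact_continuous_image continuous_on_subset[OF cf]) auto
    then obtain Kf0 where Kf0: "\<And>y. y \<in> f ` cball 0 (R + 2) \<Longrightarrow> norm y \<le> Kf0"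
      using compact_imp_bounded bounded_iff by metis
    define Kf where "Kf = max Kf0 0"
    have Kf: "\<bar>f x\<bar> \<le> Kf" if "norm x \<le> R + 2" for x using Kf0[of "f x"] that unfolding Kf_def by auto
    have Kf_nn: "Kf \<ge> 0" unfolding Kf_def by simp
    have "compact (\<phi> ` cball 0 R)" by (intro compact_continuous_image continuous_on_subset[OF cphi]) auto
    then obtain Kp0 where Kp0: "\<And>y. y \<in> \<phi> ` cball 0 R \<Longrightarrow> norm y \<le> Kp0"
      using compact_imp_bounded bounded_iff by metis
    define Kp where "Kp = max Kp0 0"
    have Kp: "\<bar>\<phi> x\<bar> \<le> Kp * indicator (cball 0 R) x" for x
    proof (cases "norm x \<le> R")
      case True then show ?thesis using Kp0[of "\<phi> x"] unfolding Kp_def by (auto simp: indicator_def)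
    next
      case False then show ?thesis using Rz[of x] by (auto simp: indicator_def)
    qed
    have Kp_nn: "Kp \<ge> 0" unfolding Kp_def by simp
    define t where "t n = inverse (real (Suc n))" for n
    have tpos: "t n > 0" for n unfolding t_def by simp
    have tle: "t n \<le> 1" for n unfolding t_def by (simp add: inverse_le_1_iff)
    have tlim: "t \<longlonglongrightarrow> 0" unfolding t_def by (rule LIMSEQ_inverse_real_of_nat)
    define A where "A n x = f x * ((\<phi> (x + t n *\<^sub>R i) - \<phi> x) / t n)" for n x
    define B where "B n x = ((f (x + (- t n) *\<^sub>R i) - f x) / t n) * \<phi> x" for n x
    have Am[measurable]: "A n \<in> borel_measurable borel" for n unfolding A_def by measurable
    have Bm[measurable]: "B n \<in> borel_measurable borel" for n unfolding B_def by measurable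
    have Abd: "\<bar>A n x\<bar> \<le> Kf * M * indicator (cball 0 (R + 1)) x" for n x
    proof (cases "norm x \<le> R + 1")
      case True
      have "\<bar>\<phi> (x + t n *\<^sub>R i) - \<phi> x\<bar> \<le> M * t n"
        using Ml[of "x + t n *\<^sub>R i" x] tpos[of n] ni by simp
      then have "\<bar>(\<phi> (x + t n *\<^sub>R i) - \<phi> x) / t n\<bar> \<le> M"
        using tpos[of n] by (simp add: divide_le_eq abs_divide mult.commute)
      moreover have "\<bar>f x\<bar> \<le> Kf" using Kf[of x] True by simp
      ultimately have "\<bar>A n x\<bar> \<le> Kf * M" unfolding A_def abs_mult
        by (intro mult_mono) (auto simp: Kf_nn)
      then show ?thesis using True by simp
    next
      case False
      have "norm (x + t n *\<^sub>R i) \<ge> norm x - t n" using norm_triangle_ineq2[of x "- (t n *\<^sub>R i)"] ni tpos[of n]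
        by (simp add: norm_minus_commute)
      then have "norm (x + t n *\<^sub>R i) > R" using False tle[of n] by linarith
      then show ?thesis using False Rz[of x] Rz[of "x + t n *\<^sub>R i"] R unfolding A_def by simp
    qed
    have Bbd: "\<bar>B n x\<bar> \<le> L * Kp * indicator (cball 0 R) x" for n x
    proof -
      have "\<bar>f (x + (- t n) *\<^sub>R i) - f x\<bar> \<le> L * t n"
        using lip[of "x + (- t n) *\<^sub>R i" x] tpos[of n] ni by simp
      then have "\<bar>(f (x + (- t n) *\<^sub>R i) - f x) / t n\<bar> \<le> L"
        using tpos[of n] by (simp add: divide_le_eq abs_divide mult.commute)
      then have "\<bar>(f (x + (- t n) *\<^sub>R i) - f x) / t n\<bar> * \<bar>\<phi> x\<bar> \<le> L * (Kp * indicator (cball 0 R) x)"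
        by (rule mult_mono) (use Kp[of x] L in auto)
      then show ?thesis by (simp only: B_def abs_mult mult.assoc)
    qed
    have eqAB: "(\<integral>x. A n x \<partial>lborel) = (\<integral>x. B n x \<partial>lborel)" for n
    proof -
      define c where "c = t n *\<^sub>R i"
      have i1: "integrable lborel (\<lambda>x. f x * \<phi> (x + c))"
      proof (rule integrable_cball[where K="Kf * Kp" and R="R + 1"])
        show "\<bar>f x * \<phi> (x + c)\<bar> \<le> Kf * Kp * indicator (cball 0 (R + 1)) x" for x
        proof (cases "norm x \<le> R + 1")
          case True
          have "\<bar>\<phi> (x + c)\<bar> \<le> Kp" using Kp[of "x + c"] Kp_nn by (cases "norm (x + c) \<le> R") (auto simp: indicator_def)
          then show ?thesis using True Kf[of x] unfolding abs_mult by (simp add: mult_mono Kf_nn)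
        next
          case False
          have "norm (x + c) \<ge> norm x - t n" using norm_triangle_ineq2[of x "- c"] ni tpos[of n]
            by (simp add: norm_minus_commute c_def)
          then have "norm (x + c) > R" using False tle[of n] by linarith
          then show ?thesis using False Rz by simp
        qed
      qed (auto simp: Kf_nn Kp_nn)
      have i2: "integrable lborel (\<lambda>x. f x * \<phi> x)"
      proof (rule integrable_cball[where K="Kf * Kp" and R="R"])
        show "\<bar>f x * \<phi> x\<bar> \<le> Kf * Kp * indicator (cball 0 R) x" for x
          using Kp[of x] Kf[of x] by (auto simp: indicator_def abs_mult mult_mono Kf_nn)
      qed (auto simp: Kf_nn Kp_nn)
      have i3: "integrable lborel (\<lambda>x. f (x - c) * \<phi> x)"
      proof (rule integrable_cball[where K="Kf * Kp" and R="R"])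
        show "\<bar>f (x - c) * \<phi> x\<bar> \<le> Kf * Kp * indicator (cball 0 R) x" for x
        proof (cases "norm x \<le> R")
          case True
          have "norm (x - c) \<le> norm x + t n" using norm_triangle_ineq4[of x c] ni tpos[of n]
            by (simp add: c_def)
          then have "norm (x - c) \<le> R + 2" using True tle[of n] by linarith
          then show ?thesis using True Kf[of "x - c"] Kp[of x] by (auto simp: abs_mult mult_mono Kf_nn)
        next
          case False then show ?thesis using Rz[of x] by simp
        qed
      qed (auto simp: Kf_nn Kp_nn)
      have tr: "(\<integral>x. f x * \<phi> (x + c) \<partial>lborel) = (\<integral>x. f (x - c) * \<phi> x \<partial>lborel)"
        using lborel_translate[of "\<lambda>x. f (x - c) * \<phi> x" c] by simp
      have "(\<integral>x. A n x \<partial>lborel) = (\<integral>x. (f x * \<phi> (x + c) - f x * \<phi> x) / t n \<partial>lborel)"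
        unfolding A_def c_def by (simp add: algebra_simps)
      also have "\<dots> = ((\<integral>x. f x * \<phi> (x + c) \<partial>lborel) - (\<integral>x. f x * \<phi> x \<partial>lborel)) / t n"
        using i1 i2 by simp
      also have "\<dots> = ((\<integral>x. f (x - c) * \<phi> x \<partial>lborel) - (\<integral>x. f x * \<phi> x \<partial>lborel)) / t n"
        using tr by simp
      also have "\<dots> = (\<integral>x. (f (x - c) * \<phi> x - f x * \<phi> x) / t n \<partial>lborel)"
        using i3 i2 by simp
      also have "\<dots> = (\<integral>x. B n x \<partial>lborel)"
        unfolding B_def c_def by (simp add: algebra_simps)
      finally show ?thesis .
    qed
    have limA: "(\<lambda>n. \<integral>x. A n x \<partial>lborel) \<longlonglongrightarrow> (\<integral>x. f x * (d\<phi> x \<bullet> i) \<partial>lborel)"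
    proof (rule integral_dominated_convergence[where w="\<lambda>x. Kf * M * indicator (cball 0 (R + 1)) x"])
      show "integrable lborel (\<lambda>x. Kf * M * indicator (cball 0 (R + 1)) x :: real)"
        by (intro integrable_mult_right integrable_real_indicator emeasure_bounded_finite) auto
      show "AE x in lborel. (\<lambda>n. A n x) \<longlonglongrightarrow> f x * (d\<phi> x \<bullet> i)"
      proof (rule AE_I2)
        fix x
        have "(\<lambda>n. (\<phi> (x + t n *\<^sub>R i) - \<phi> x) / t n) \<longlonglongrightarrow> d\<phi> x \<bullet> i"
          using dir_quot[OF dphi[of x] tlim, of i] tpos by (simp add: less_imp_neq[symmetric])
        then show "(\<lambda>n. A n x) \<longlonglongrightarrow> f x * (d\<phi> x \<bullet> i)" unfolding A_def
          by (intro tendsto_mult tendsto_const)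
      qed
      show "AE x in lborel. norm (A n x) \<le> Kf * M * indicator (cball 0 (R + 1)) x" for n
        using Abd by auto
    qed auto
    have limB: "(\<lambda>n. \<integral>x. B n x \<partial>lborel) \<longlonglongrightarrow> (\<integral>x. - ((g x \<bullet> i) * \<phi> x) \<partial>lborel)"
    proof (rule integral_dominated_convergence[where w="\<lambda>x. L * Kp * indicator (cball 0 R) x"])
      show "integrable lborel (\<lambda>x. L * Kp * indicator (cball 0 R) x :: real)"
        by (intro integrable_mult_right integrable_real_indicator emeasure_bounded_finite) auto
      show "AE x in lborel. (\<lambda>n. B n x) \<longlonglongrightarrow> - ((g x \<bullet> i) * \<phi> x)"
        using der
      proof eventually_elim
        case (elim x)
        have "(\<lambda>n. (f (x + (- t n) *\<^sub>R i) - f x) / (- t n)) \<longlonglongrightarrow> g x \<bullet> i"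
          using dir_quot[OF elim tendsto_minus[OF tlim, simplified], of i] tpos by (simp add: less_imp_neq[symmetric])
        then have "(\<lambda>n. - ((f (x + (- t n) *\<^sub>R i) - f x) / (- t n))) \<longlonglongrightarrow> - (g x \<bullet> i)"
          by (rule tendsto_minus)
        then have "(\<lambda>n. (f (x + (- t n) *\<^sub>R i) - f x) / t n) \<longlonglongrightarrow> - (g x \<bullet> i)"
          by simp
        then show "(\<lambda>n. B n x) \<longlonglongrightarrow> - ((g x \<bullet> i) * \<phi> x)" unfolding B_def
          using tendsto_mult[OF _ tendsto_const] by fastforce
      qed
      show "AE x in lborel. norm (B n x) \<le> L * Kp * indicator (cball 0 R) x" for n
        using Bbd by auto
    qed auto
    have "(\<integral>x. f x * (d\<phi> x \<bullet> i) \<partial>lborel) = (\<integral>x. - ((g x \<bullet> i) * \<phi> x) \<partial>lborel)"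
      using LIMSEQ_unique[OF limA] limB eqAB by simp
    then show ?thesis by simp
  qed
  show ?thesis unfolding weak_gradient_def using fm gm loc ibp by blast
qed



definition pdv :: "('a::euclidean_space \<Rightarrow> real) \<Rightarrow> 'a \<Rightarrow> 'a \<Rightarrow> real" where
  "pdv G i x = lim (\<lambda>n. (G (x + inverse (real (Suc n)) *\<^sub>R i) - G x) / inverse (real (Suc n)))"

definition grad :: "('a::euclidean_space \<Rightarrow> real) \<Rightarrow> 'a \<Rightarrow> 'a" where
  "grad G x = (\<Sum>i\<in>Basis. pdv G i x *\<^sub>R i)"

lemma grad_meas[measurable]:
  assumes [measurable]: "G \<in> borel_measurable borel"
  shows "grad G \<in> borel_measurable borel"
  unfolding grad_def pdv_def by measurable

lemma grad_der:
  fixes G :: "'a::euclidean_space \<Rightarrow> real"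
  assumes d: "(G has_derivative D) (at x)"
  shows "D = (\<lambda>h. grad G x \<bullet> h)"
proof -
  have lin: "linear D" using d has_derivative_linear by blast
  have p: "pdv G i x = D i" for i
  proof -
    have "(\<lambda>n. (G (x + inverse (real (Suc n)) *\<^sub>R i) - G x) / inverse (real (Suc n))) \<longlonglongrightarrow> D i"
      by (rule dir_quot[OF d LIMSEQ_inverse_real_of_nat]) simp
    then show ?thesis unfolding pdv_def by (rule limI)
  qed
  show ?thesis
  proof
    fix h
    have "D h = D (\<Sum>i\<in>Basis. (h \<bullet> i) *\<^sub>R i)" by (simp only: euclidean_representation)
    also have "\<dots> = (\<Sum>i\<in>Basis. (h \<bullet> i) * D i)"
      unfolding linear_sum[OF lin] by (intro sum.cong refl) (simp only: o_def linear.scaleR[OF lin] real_scaleR_def)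
    also have "\<dots> = grad G x \<bullet> h"
      unfolding grad_def inner_sum_left inner_scaleR_left p
      by (intro sum.cong refl) (simp only: inner_commute mult.commute)
    finally show "D h = grad G x \<bullet> h" .
  qed
qed

lemma norm_from_bound:
  fixes v :: "'a::real_inner"
  assumes c0: "c \<ge> 0" and "\<And>h. \<bar>v \<bullet> h\<bar> \<le> c * norm h"
  shows "norm v \<le> c"
proof (cases "v = 0")
  case True then show ?thesis using c0 by simp
next
  case False
  have "(norm v)^2 \<le> c * norm v" using assms(2)[of v] by (simp add: power2_norm_eq_inner)
  then show ?thesis using False by (simp add: power2_eq_square)
qed

lemma mul_le_abs: assumes "\<bar>g\<bar> \<le> B" shows "s * g \<le> \<bar>s\<bar> * (B::real)"
proof -
  have "s * g \<le> \<bar>s * g\<bar>" by (rule abs_ge_self)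
  also have "\<dots> = \<bar>s\<bar> * \<bar>g\<bar>" by (rule abs_mult)
  also have "\<dots> \<le> \<bar>s\<bar> * B" using assms by (intro mult_left_mono) auto
  finally show ?thesis .
qed

lemma H_deriv:
  assumes "prob_space M" and Gm[measurable]: "G \<in> borel_measurable M"
    and Gb: "\<And>x. x \<in> space M \<Longrightarrow> \<bar>G x\<bar> \<le> B"
  shows "((\<lambda>l. \<integral>x. exp (l * G x) \<partial>M) has_real_derivative (\<integral>x. G x * exp (l * G x) \<partial>M)) (at l)"
proof -
  interpret prob_space M by fact
  have B0: "B \<ge> 0" if "space M \<noteq> {}" using Gb that by fastforce
  have int: "integrable M (\<lambda>x. exp (s * G x))" for s
    by (rule integrable_const_bound[where B="exp (\<bar>s\<bar> * B)"])
       (use Gb in \<open>auto intro!: AE_I2 mul_le_abs\<close>)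
  have "((\<lambda>y. ((\<integral>x. exp (y * G x) \<partial>M) - (\<integral>x. exp (l * G x) \<partial>M)) / (y - l))
        \<longlongrightarrow> (\<integral>x. G x * exp (l * G x) \<partial>M)) (at l)"
    unfolding tendsto_at_iff_sequentially comp_def
  proof (intro allI impI)
    fix X :: "nat \<Rightarrow> real" assume X: "\<forall>i. X i \<in> UNIV - {l}" and Xl: "X \<longlonglongrightarrow> l"
    have "Bseq X" using Xl convergent_imp_Bseq convergentI by blast
    then obtain K where K: "K > 0" "\<And>n. norm (X n) \<le> K" by (auto elim: BseqE)
    define R where "R = max K \<bar>l\<bar>"
    have eq: "((\<integral>x. exp (X n * G x) \<partial>M) - (\<integral>x. exp (l * G x) \<partial>M)) / (X n - l)
       = (\<integral>x. (exp (X n * G x) - exp (l * G x)) / (X n - l) \<partial>M)" for n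
      using int by simp
    have "(\<lambda>n. \<integral>x. (exp (X n * G x) - exp (l * G x)) / (X n - l) \<partial>M) \<longlonglongrightarrow> (\<integral>x. G x * exp (l * G x) \<partial>M)"
    proof (rule integral_dominated_convergence[where w="\<lambda>x. exp (R * B) * B"])
      show "AE x in M. (\<lambda>n. (exp (X n * G x) - exp (l * G x)) / (X n - l)) \<longlonglongrightarrow> G x * exp (l * G x)"
      proof (rule AE_I2)
        fix x
        have d: "((\<lambda>s. exp (s * G x)) has_real_derivative exp (l * G x) * G x) (at l)"
          by (auto intro!: derivative_eq_intros)
        have "(\<lambda>n. X n - l) \<longlonglongrightarrow> 0" using tendsto_diff[OF Xl tendsto_const[of l]] by simp
        from quot_seq[OF d this] X
        show "(\<lambda>n. (exp (X n * G x) - exp (l * G x)) / (X n - l)) \<longlonglongrightarrow> G x * exp (l * G x)"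
          by (simp add: mult.commute)
      qed
      show "AE x in M. norm ((exp (X n * G x) - exp (l * G x)) / (X n - l)) \<le> exp (R * B) * B" for n
      proof (rule AE_I2)
        fix x assume x: "x \<in> space M"
        have Bx: "\<bar>G x\<bar> \<le> B" using Gb x by auto
        have "\<bar>exp (X n * G x) - exp (l * G x)\<bar> \<le> exp (max (X n * G x) (l * G x)) * \<bar>X n * G x - l * G x\<bar>"
          by (rule exp_diff_le)
        also have "\<dots> \<le> exp (R * B) * (\<bar>X n - l\<bar> * B)"
        proof (rule mult_mono)
          have "X n * G x \<le> R * B"
          proof -
            have "X n * G x \<le> \<bar>X n\<bar> * \<bar>G x\<bar>" by (metis abs_ge_self abs_mult)
            also have "\<dots> \<le> R * B" using K(2)[of n] Bx unfolding R_def by (intro mult_mono) auto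
            finally show ?thesis .
          qed
          moreover have "l * G x \<le> R * B"
          proof -
            have "l * G x \<le> \<bar>l\<bar> * \<bar>G x\<bar>" by (metis abs_ge_self abs_mult)
            also have "\<dots> \<le> R * B" using Bx unfolding R_def by (intro mult_mono) auto
            finally show ?thesis .
          qed
          ultimately show "exp (max (X n * G x) (l * G x)) \<le> exp (R * B)" by simp
          show "\<bar>X n * G x - l * G x\<bar> \<le> \<bar>X n - l\<bar> * B"
            using Bx by (simp add: left_diff_distrib[symmetric] abs_mult mult_left_mono)
          show "0 \<le> \<bar>X n * G x - l * G x\<bar>" by simp
          show "0 \<le> exp (R * B)" by simp
        qed
        finally have "\<bar>exp (X n * G x) - exp (l * G x)\<bar> \<le> exp (R * B) * B * \<bar>X n - l\<bar>" by (simp only: mult_ac)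
        moreover have "\<bar>X n - l\<bar> > 0" using X by auto
        ultimately show "norm ((exp (X n * G x) - exp (l * G x)) / (X n - l)) \<le> exp (R * B) * B"
          by (simp add: abs_divide divide_le_eq)
      qed
      show "(\<lambda>x. G x * exp (l * G x)) \<in> borel_measurable M" by measurable
      show "(\<lambda>x. (exp (X n * G x) - exp (l * G x)) / (X n - l)) \<in> borel_measurable M" for n
        by measurable
      show "integrable M (\<lambda>x. exp (R * B) * B)" by simp
    qed
    then show "(\<lambda>n. ((\<integral>x. exp (X n * G x) \<partial>M) - (\<integral>x. exp (l * G x) \<partial>M)) / (X n - l))
        \<longlonglongrightarrow> (\<integral>x. G x * exp (l * G x) \<partial>M)" unfolding eq .
  qed
  then show ?thesis using has_field_derivative_iff by blast
qed



lemma herbst: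
  fixes G :: "'a \<Rightarrow> real" and B c l :: real
  assumes P: "prob_space M" and Gm[measurable]: "G \<in> borel_measurable M"
    and Gb: "\<And>x. x \<in> space M \<Longrightarrow> \<bar>G x\<bar> \<le> B" and c0: "c \<ge> 0"
    and hyp: "\<And>l. l > 0 \<Longrightarrow> l * (\<integral>x. G x * exp (l * G x) \<partial>M)
        - (\<integral>x. exp (l * G x) \<partial>M) * ln (\<integral>x. exp (l * G x) \<partial>M) \<le> c * l\<^sup>2 * (\<integral>x. exp (l * G x) \<partial>M)"
    and l: "l > 0"
  shows "ln (\<integral>x. exp (l * G x) \<partial>M) \<le> l * (\<integral>x. G x \<partial>M) + c * l\<^sup>2"
proof -
  interpret prob_space M by fact
  define H where "H s = (\<integral>x. exp (s * G x) \<partial>M)" for s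
  define D where "D s = (\<integral>x. G x * exp (s * G x) \<partial>M)" for s
  have Hder: "(H has_real_derivative D s) (at s)" for s
    unfolding H_def D_def by (rule H_deriv[OF P Gm Gb])
  have int: "integrable M (\<lambda>x. exp (s * G x))" for s
    by (rule integrable_const_bound[where B="exp (\<bar>s\<bar> * B)"])
       (use Gb in \<open>auto intro!: AE_I2 mul_le_abs\<close>)
  have Hpos: "H s > 0" for s
  proof -
    have "(\<integral>x. exp (- (\<bar>s\<bar> * B)) \<partial>M) \<le> H s" unfolding H_def
    proof (rule integral_mono)
      show "exp (- (\<bar>s\<bar> * B)) \<le> exp (s * G x)" if "x \<in> space M" for x
        using mul_le_abs[OF Gb[OF that], of "-s"] by simp
    qed (use int in auto)
    moreover have "(\<integral>x. exp (- (\<bar>s\<bar> * B)) \<partial>M) > 0" by (simp add: prob_space)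
    ultimately show ?thesis by linarith
  qed
  have H0: "H 0 = 1" unfolding H_def by (simp add: prob_space)
  have D0: "D 0 = (\<integral>x. G x \<partial>M)" unfolding D_def by simp
  have lnder: "((\<lambda>s. ln (H s)) has_real_derivative D s / H s) (at s)" for s
    using DERIV_chain2[OF DERIV_ln_divide[OF Hpos[of s]] Hder[of s]] by simp
  define K where "K s = ln (H s) / s - c * s" for s
  have Kder: "(K has_real_derivative ((D s / H s) * s - ln (H s) * 1) / (s * s) - c) (at s)"
    if "s \<noteq> 0" for s
    unfolding K_def
    by (intro DERIV_diff DERIV_divide lnder DERIV_ident that DERIV_cmult_Id)
  have Kneg: "((D s / H s) * s - ln (H s) * 1) / (s * s) - c \<le> 0" if s: "s > 0" for s
  proof -
    have hs: "H s > 0" by (rule Hpos)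
    have "(s * D s - H s * ln (H s)) / H s = s * D s / H s - H s * ln (H s) / H s"
      by (rule diff_divide_distrib)
    also have "\<dots> = (D s / H s) * s - ln (H s) * 1" using hs by simp
    finally have "(D s / H s) * s - ln (H s) * 1 = (s * D s - H s * ln (H s)) / H s" by simp
    then have "((D s / H s) * s - ln (H s) * 1) / (s * s) = (s * D s - H s * ln (H s)) / (H s * (s * s))"
      by simp
    also have "\<dots> \<le> (c * s\<^sup>2 * H s) / (H s * (s * s))"
      using hyp[OF s] hs s unfolding H_def[symmetric] D_def[symmetric]
      by (intro divide_right_mono) auto
    also have "\<dots> = c * (H s * (s * s)) / (H s * (s * s))"
      by (simp add: power2_eq_square mult_ac)
    also have "\<dots> = c" using hs s by simp
    finally show ?thesis by simp
  qed
  have mono: "K l \<le> K e" if "0 < e" "e \<le> l" for e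
  proof (rule DERIV_nonpos_imp_nonincreasing[OF that(2)])
    fix x assume "e \<le> x" "x \<le> l"
    then have x: "x > 0" using that by linarith
    show "\<exists>y. DERIV K x :> y \<and> y \<le> 0"
      using Kder[of x] Kneg[OF x] x by auto
  qed
  have "((\<lambda>y. (ln (H y) - ln (H 0)) / (y - 0)) \<longlongrightarrow> D 0 / H 0) (at 0)"
    using lnder[of 0] unfolding has_field_derivative_iff .
  then have "((\<lambda>y. ln (H y) / y) \<longlongrightarrow> (\<integral>x. G x \<partial>M)) (at 0)" using H0 D0 by simp
  then have "((\<lambda>y. ln (H y) / y) \<longlongrightarrow> (\<integral>x. G x \<partial>M)) (at_right 0)"
    by (rule tendsto_mono[rotated]) (simp add: at_le)
  then have "((\<lambda>y. ln (H y) / y - c * y) \<longlongrightarrow> (\<integral>x. G x \<partial>M) - c * 0) (at_right 0)"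
    by (intro tendsto_intros)
  then have lim: "(K \<longlongrightarrow> (\<integral>x. G x \<partial>M)) (at_right 0)"
    unfolding K_def by simp
  have "K l \<le> (\<integral>x. G x \<partial>M)"
  proof (rule tendsto_le[OF _ lim tendsto_const])
    show "\<forall>\<^sub>F x in at_right 0. K l \<le> K x"
      using eventually_at_right_real[OF l] by eventually_elim (use mono in auto)
  qed simp
  then have "ln (H l) / l \<le> (\<integral>x. G x \<partial>M) + c * l" unfolding K_def by simp
  then have "ln (H l) \<le> ((\<integral>x. G x \<partial>M) + c * l) * l" using l by (simp add: divide_le_eq)
  then show ?thesis unfolding H_def by (simp add: power2_eq_square algebra_simps)
qed



lemma sq_exp_half: "(exp (a / 2))\<^sup>2 = exp (a::real)"
  using exp_double[of "a/2"] by simp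

lemma lsi_step:
  fixes q :: "'a::euclidean_space \<Rightarrow> real" and G :: "'a \<Rightarrow> real"
  assumes q_meas[measurable]: "q \<in> borel_measurable borel"
    and gamma_prob: "prob_space (density lborel (\<lambda>x. ennreal (q x)))"
    and lsi: "LSI (density lborel (\<lambda>x. ennreal (q x))) \<alpha>" and alpha_pos: "\<alpha> > 0"
    and L: "L \<ge> 0" and Glip: "\<And>x y. \<bar>G x - G y\<bar> \<le> L * norm (x - y)"
    and Gb: "\<And>x. \<bar>G x\<bar> \<le> B"
    and Gd: "AE x in lborel. \<exists>D. (G has_derivative D) (at x) \<and> (\<forall>h. \<bar>D h\<bar> \<le> norm h)"
    and l: "l > 0"
  shows "l * (\<integral>x. G x * exp (l * G x) \<partial>density lborel (\<lambda>x. ennreal (q x)))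
        - (\<integral>x. exp (l * G x) \<partial>density lborel (\<lambda>x. ennreal (q x)))
          * ln (\<integral>x. exp (l * G x) \<partial>density lborel (\<lambda>x. ennreal (q x)))
       \<le> \<alpha> / 4 * l\<^sup>2 * (\<integral>x. exp (l * G x) \<partial>density lborel (\<lambda>x. ennreal (q x)))"
proof -
  define \<gamma> where "\<gamma> = density lborel (\<lambda>x. ennreal (q x))"
  interpret prob_space \<gamma> using gamma_prob unfolding \<gamma>_def .
  have cG: "continuous_on UNIV G" by (rule lip_cont[OF L]) (use Glip in auto)
  have Gm[measurable]: "G \<in> borel_measurable borel" by (rule borel_measurable_continuous_onI[OF cG])
  have B0: "B \<ge> 0" using Gb[of 0] by linarith
  define f where "f x = exp (l * G x / 2)" for x
  define C where "C = l / 2 * exp (l * B / 2)"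
  define v where "v x = (l / 2 * f x) *\<^sub>R grad G x" for x
  define g where "g x = (if norm (v x) \<le> C then v x else 0)" for x
  have fm[measurable]: "f \<in> borel_measurable borel" unfolding f_def by measurable
  have vm[measurable]: "v \<in> borel_measurable borel" unfolding v_def by measurable
  have gm[measurable]: "g \<in> borel_measurable borel" unfolding g_def by measurable
  have fle: "f x \<le> exp (l * B / 2)" for x
    unfolding f_def using Gb[of x] l by (simp add: mult_left_mono)
  have fpos: "f x > 0" for x unfolding f_def by simp
  have C0: "C \<ge> 0" unfolding C_def using l by simp
  have gC: "norm (g x) \<le> C" for x unfolding g_def using C0 by auto
  have good: "(f has_derivative (\<lambda>h. g x \<bullet> h)) (at x) \<and> norm (g x) \<le> l / 2 * f x"
    if ex: "\<exists>D. (G has_derivative D) (at x) \<and> (\<forall>h. \<bar>D h\<bar> \<le> norm h)" for x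
  proof -
    obtain D where D: "(G has_derivative D) (at x)" "\<And>h. \<bar>D h\<bar> \<le> norm h" using ex by blast
    have De: "D = (\<lambda>h. grad G x \<bullet> h)" by (rule grad_der[OF D(1)])
    have ng: "norm (grad G x) \<le> 1"
      by (rule norm_from_bound) (use D(2) De in auto)
    have nv: "norm (v x) \<le> l / 2 * f x"
      unfolding v_def using ng l fpos[of x] by (simp add: mult_left_le)
    also have "\<dots> \<le> C" unfolding C_def using fle[of x] l by simp
    finally have gv: "g x = v x" unfolding g_def by simp
    have "(f has_derivative (\<lambda>h. exp (l * G x / 2) * (l * D h / 2))) (at x)"
      unfolding f_def by (auto intro!: derivative_eq_intros D(1))
    moreover have "(\<lambda>h. exp (l * G x / 2) * (l * D h / 2)) = (\<lambda>h. g x \<bullet> h)"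
      unfolding gv v_def De f_def by (auto simp: inner_scaleR_left)
    ultimately show ?thesis using nv gv by simp
  qed
  have flip: "\<bar>f x - f y\<bar> \<le> (exp (l * B / 2) * (l / 2 * L)) * norm (x - y)" for x y
  proof -
    have "\<bar>f x - f y\<bar> \<le> exp (max (l * G x / 2) (l * G y / 2)) * \<bar>l * G x / 2 - l * G y / 2\<bar>"
      unfolding f_def by (rule exp_diff_le)
    also have "\<dots> \<le> exp (l * B / 2) * (l / 2 * (L * norm (x - y)))"
    proof (rule mult_mono)
      show "exp (max (l * G x / 2) (l * G y / 2)) \<le> exp (l * B / 2)"
      proof -
        have "l * G x \<le> l * B" "l * G y \<le> l * B"
          using Gb[of x] Gb[of y] l by (auto intro!: mult_left_mono dest: abs_le_D1)
        then show ?thesis by simp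
      qed
      have "l * G x / 2 - l * G y / 2 = (l / 2) * (G x - G y)" by (simp add: algebra_simps)
      then have "\<bar>l * G x / 2 - l * G y / 2\<bar> = l / 2 * \<bar>G x - G y\<bar>" using l
        by (simp only: abs_mult)
      also have "\<dots> \<le> l / 2 * (L * norm (x - y))" using Glip[of x y] l by simp
      finally show "\<bar>l * G x / 2 - l * G y / 2\<bar> \<le> l / 2 * (L * norm (x - y))" .
    qed auto
    finally show ?thesis by (simp add: mult_ac)
  qed
  have wg: "weak_gradient f g"
  proof (rule weak_gradient_lip[OF _ flip gm gC])
    show "0 \<le> exp (l * B / 2) * (l / 2 * L)" using l L by simp
    show "AE x in lborel. (f has_derivative (\<lambda>h. g x \<bullet> h)) (at x)"
      using Gd by eventually_elim (use good in blast)
  qed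
  have sq: "(f x)\<^sup>2 = exp (l * G x)" for x unfolding f_def by (rule sq_exp_half)
  have lnsq: "ln ((f x)\<^sup>2) = l * G x" for x unfolding sq by simp
  have int_exp: "integrable \<gamma> (\<lambda>x. exp (l * G x))"
    by (rule integrable_const_bound[where B="exp (l * B)"])
       (auto intro!: AE_I2 simp: \<gamma>_def intro: mul_le_abs[OF Gb, of l, simplified abs_of_pos[OF l]])
  have int_Gexp: "integrable \<gamma> (\<lambda>x. G x * exp (l * G x))"
    by (rule integrable_const_bound[where B="B * exp (l * B)"])
       (auto intro!: AE_I2 simp: \<gamma>_def abs_mult B0 intro!: mult_mono Gb mul_le_abs[OF Gb, of l, simplified abs_of_pos[OF l]])
  have int_g: "integrable \<gamma> (\<lambda>x. (norm (g x))\<^sup>2)"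
    by (rule integrable_const_bound[where B="C\<^sup>2"])
       (auto intro!: AE_I2 power_mono gC simp: \<gamma>_def)
  have "(\<forall>x. f x \<ge> 0)" using fpos less_imp_le by blast
  moreover have "integrable \<gamma> (\<lambda>x. (f x)\<^sup>2)" unfolding sq by (rule int_exp)
  ultimately have E: "Ent \<gamma> (\<lambda>x. (f x)\<^sup>2) \<le> \<alpha> * (\<integral>x. (norm (g x))\<^sup>2 \<partial>\<gamma>)"
    using lsi wg int_g unfolding LSI_def \<gamma>_def by blast
  define H where "H = (\<integral>x. exp (l * G x) \<partial>\<gamma>)"
  have "Ent \<gamma> (\<lambda>x. (f x)\<^sup>2) = (\<integral>x. exp (l * G x) * (l * G x) \<partial>\<gamma>) - H * ln H"
    unfolding Ent_def lnsq unfolding sq H_def ..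
  also have "(\<integral>x. exp (l * G x) * (l * G x) \<partial>\<gamma>) = l * (\<integral>x. G x * exp (l * G x) \<partial>\<gamma>)"
    by (simp add: mult_ac)
  finally have E1: "Ent \<gamma> (\<lambda>x. (f x)\<^sup>2) = l * (\<integral>x. G x * exp (l * G x) \<partial>\<gamma>) - H * ln H" .
  have "(\<integral>x. (norm (g x))\<^sup>2 \<partial>\<gamma>) \<le> (\<integral>x. l\<^sup>2 / 4 * exp (l * G x) \<partial>\<gamma>)"
  proof (rule integral_mono_AE[OF int_g])
    show "integrable \<gamma> (\<lambda>x. l\<^sup>2 / 4 * exp (l * G x))" using int_exp by simp
    have "AE x in lborel. (norm (g x))\<^sup>2 \<le> l\<^sup>2 / 4 * exp (l * G x)"
      using Gd
    proof eventually_elim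
      case (elim x)
      have "norm (g x) \<le> l / 2 * f x" using good[OF elim] by blast
      then have "(norm (g x))\<^sup>2 \<le> (l / 2 * f x)\<^sup>2" by (rule power_mono) simp
      also have "\<dots> = l\<^sup>2 / 4 * exp (l * G x)" unfolding power_mult_distrib sq
        by (simp add: power2_eq_square)
      finally show ?case .
    qed
    then show "AE x in \<gamma>. (norm (g x))\<^sup>2 \<le> l\<^sup>2 / 4 * exp (l * G x)"
      unfolding \<gamma>_def by (subst AE_density) (auto elim!: eventually_mono)
  qed
  also have "\<dots> = l\<^sup>2 / 4 * H" unfolding H_def by simp
  finally have "\<alpha> * (\<integral>x. (norm (g x))\<^sup>2 \<partial>\<gamma>) \<le> \<alpha> * (l\<^sup>2 / 4 * H)"
    using alpha_pos by simp
  with E E1 have "l * (\<integral>x. G x * exp (l * G x) \<partial>\<gamma>) - H * ln H \<le> \<alpha> / 4 * l\<^sup>2 * H"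
    by simp
  then show ?thesis unfolding H_def \<gamma>_def .
qed



lemma gauss_bounded:
  fixes q :: "'a::euclidean_space \<Rightarrow> real" and G :: "'a \<Rightarrow> real"
  assumes q_meas[measurable]: "q \<in> borel_measurable borel"
    and gamma_prob: "prob_space (density lborel (\<lambda>x. ennreal (q x)))"
    and lsi: "LSI (density lborel (\<lambda>x. ennreal (q x))) \<alpha>" and alpha_pos: "\<alpha> > 0"
    and L: "L \<ge> 0" and Glip: "\<And>x y. \<bar>G x - G y\<bar> \<le> L * norm (x - y)"
    and Gb: "\<And>x. \<bar>G x\<bar> \<le> B"
    and Gd: "AE x in lborel. \<exists>D. (G has_derivative D) (at x) \<and> (\<forall>h. \<bar>D h\<bar> \<le> norm h)"
    and l: "l > 0"
  shows "(\<integral>x. exp (l * G x) \<partial>density lborel (\<lambda>x. ennreal (q x)))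
         \<le> exp (l * (\<integral>x. G x \<partial>density lborel (\<lambda>x. ennreal (q x))) + \<alpha> / 4 * l\<^sup>2)"
proof -
  define \<gamma> where "\<gamma> = density lborel (\<lambda>x. ennreal (q x))"
  interpret prob_space \<gamma> using gamma_prob unfolding \<gamma>_def .
  have cG: "continuous_on UNIV G" by (rule lip_cont[OF L]) (use Glip in auto)
  have Gm[measurable]: "G \<in> borel_measurable borel" by (rule borel_measurable_continuous_onI[OF cG])
  have Gmg: "G \<in> borel_measurable \<gamma>" unfolding \<gamma>_def by simp
  have "ln (\<integral>x. exp (l * G x) \<partial>\<gamma>) \<le> l * (\<integral>x. G x \<partial>\<gamma>) + \<alpha> / 4 * l\<^sup>2"
  proof (rule herbst[OF gamma_prob[folded \<gamma>_def] Gmg])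
    show "\<bar>G x\<bar> \<le> B" for x by (rule Gb)
    show "0 \<le> \<alpha> / 4" using alpha_pos by simp
    show "l' * (\<integral>x. G x * exp (l' * G x) \<partial>\<gamma>) - (\<integral>x. exp (l' * G x) \<partial>\<gamma>) * ln (\<integral>x. exp (l' * G x) \<partial>\<gamma>)
          \<le> \<alpha> / 4 * l'\<^sup>2 * (\<integral>x. exp (l' * G x) \<partial>\<gamma>)" if "l' > 0" for l'
      unfolding \<gamma>_def by (rule lsi_step[OF q_meas gamma_prob lsi alpha_pos L Glip Gb Gd that])
  qed (rule l)
  moreover have "(\<integral>x. exp (l * G x) \<partial>\<gamma>) > 0"
  proof -
    have int: "integrable \<gamma> (\<lambda>x. exp (l * G x))"
      by (rule integrable_const_bound[where B="exp (\<bar>l\<bar> * B)"])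
         (auto intro!: AE_I2 mul_le_abs Gb simp: \<gamma>_def)
    have "(\<integral>x. exp (- (\<bar>l\<bar> * B)) \<partial>\<gamma>) \<le> (\<integral>x. exp (l * G x) \<partial>\<gamma>)"
    proof (rule integral_mono)
      show "exp (- (\<bar>l\<bar> * B)) \<le> exp (l * G x)" for x
        using mul_le_abs[OF Gb[of x], of "-l"] by simp
    qed (use int in auto)
    moreover have "(\<integral>x. exp (- (\<bar>l\<bar> * B)) \<partial>\<gamma>) > 0" by (simp add: prob_space)
    ultimately show ?thesis by linarith
  qed
  ultimately show ?thesis unfolding \<gamma>_def[symmetric]
    by (metis exp_le_cancel_iff exp_ln)
qed

lemma arctan_scaled_lim: "(\<lambda>n. real (Suc n) * arctan (y / real (Suc n))) \<longlonglongrightarrow> y"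
proof (cases "y = 0")
  case True then show ?thesis by simp
next
  case False
  define s where "s n = y / real (Suc n)" for n
  have s0: "s \<longlonglongrightarrow> 0" unfolding s_def
    using tendsto_mult[OF tendsto_const[of y] LIMSEQ_inverse_real_of_nat] by (simp add: divide_inverse)
  have sn: "s n \<noteq> 0" for n unfolding s_def using False by simp
  have "(\<lambda>n. (arctan (0 + s n) - arctan 0) / s n) \<longlonglongrightarrow> inverse (1 + 0\<^sup>2)"
    by (rule quot_seq[OF DERIV_arctan s0 sn])
  then have "(\<lambda>n. arctan (s n) / s n) \<longlonglongrightarrow> 1" by simp
  then have "(\<lambda>n. y * (arctan (s n) / s n)) \<longlonglongrightarrow> y * 1" by (intro tendsto_intros)
  moreover have "y * (arctan (s n) / s n) = real (Suc n) * arctan (y / real (Suc n))" for n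
    unfolding s_def using False by (simp add: field_simps)
  ultimately show ?thesis by simp
qed



lemma concentration:
  fixes q F :: "'a::euclidean_space \<Rightarrow> real"
  assumes q_meas[measurable]: "q \<in> borel_measurable borel"
    and gamma_prob: "prob_space (density lborel (\<lambda>x. ennreal (q x)))"
    and lsi: "LSI (density lborel (\<lambda>x. ennreal (q x))) \<alpha>" and alpha_pos: "\<alpha> > 0"
    and F: "lip_grad_le F 1"
    and Fint: "integrable (density lborel (\<lambda>x. ennreal (q x))) F"
    and r: "r > 0"
  shows "measure (density lborel (\<lambda>x. ennreal (q x)))
           {x. r \<le> F x - (\<integral>y. F y \<partial>density lborel (\<lambda>x. ennreal (q x)))} \<le> exp (- (r\<^sup>2 / \<alpha>))"
proof -
  define \<gamma> where "\<gamma> = density lborel (\<lambda>x. ennreal (q x))"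
  interpret prob_space \<gamma> using gamma_prob unfolding \<gamma>_def .
  obtain L where Lip: "L-lipschitz_on UNIV F"
    and Fae: "AE x in lborel. F differentiable (at x) \<and> onorm (frechet_derivative F (at x)) \<le> 1"
    using F unfolding lip_grad_le_def by blast
  have L: "L \<ge> 0" and Flip: "\<And>x y. \<bar>F x - F y\<bar> \<le> L * norm (x - y)"
    using Lip unfolding lipschitz_on_def by (auto simp: dist_norm dist_real_def)
  have cF: "continuous_on UNIV F" by (rule lip_cont[OF L]) (use Flip in auto)
  have Fm[measurable]: "F \<in> borel_measurable borel" by (rule borel_measurable_continuous_onI[OF cF])
  have Fd: "AE x in lborel. \<exists>D. (F has_derivative D) (at x) \<and> (\<forall>h. \<bar>D h\<bar> \<le> norm h)"
    using Fae
  proof eventually_elim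
    case (elim x)
    define D where "D = frechet_derivative F (at x)"
    have d: "(F has_derivative D) (at x)" using elim frechet_derivative_works unfolding D_def by blast
    have "\<bar>D h\<bar> \<le> norm h" for h
    proof -
      have "norm (D h) \<le> onorm D * norm h" by (rule onorm[OF has_derivative_bounded_linear[OF d]])
      also have "\<dots> \<le> 1 * norm h" using elim unfolding D_def by (intro mult_right_mono) auto
      finally show ?thesis by simp
    qed
    with d show ?case by blast
  qed
  define N where "N n = real (Suc n)" for n
  have Npos: "N n > 0" for n unfolding N_def by simp
  define Gn where "Gn n x = N n * arctan (F x / N n)" for n x
  have Gnm[measurable]: "Gn n \<in> borel_measurable borel" for n unfolding Gn_def by measurable
  have Gn_abs: "\<bar>Gn n x\<bar> \<le> \<bar>F x\<bar>" for n x
  proof -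
    have "\<bar>Gn n x\<bar> = N n * \<bar>arctan (F x / N n)\<bar>" unfolding Gn_def using Npos[of n] by (simp add: abs_mult)
    also have "\<dots> \<le> N n * \<bar>F x / N n\<bar>" using Npos[of n] abs_arctan_le[of "F x / N n"] by (intro mult_left_mono) auto
    also have "\<dots> = \<bar>F x\<bar>" using Npos[of n] by (simp add: abs_divide)
    finally show ?thesis .
  qed
  have Gn_lim: "(\<lambda>n. Gn n x) \<longlonglongrightarrow> F x" for x
    unfolding Gn_def N_def by (rule arctan_scaled_lim)
  have gb: "(\<integral>x. exp (l * Gn n x) \<partial>\<gamma>) \<le> exp (l * (\<integral>x. Gn n x \<partial>\<gamma>) + \<alpha> / 4 * l\<^sup>2)"
    if l: "l > 0" for l n
    unfolding \<gamma>_def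
  proof (rule gauss_bounded[OF q_meas gamma_prob lsi alpha_pos L _ _ _ l])
    show "\<bar>Gn n x - Gn n y\<bar> \<le> L * norm (x - y)" for x y
    proof -
      have "\<bar>Gn n x - Gn n y\<bar> = N n * \<bar>arctan (F x / N n) - arctan (F y / N n)\<bar>"
        unfolding Gn_def using Npos[of n] by (simp add: abs_mult right_diff_distrib[symmetric])
      also have "\<dots> \<le> N n * \<bar>F x / N n - F y / N n\<bar>"
        using Npos[of n] arctan_lip[of "F x / N n" "F y / N n"] by (intro mult_left_mono) auto
      also have "\<dots> = \<bar>F x - F y\<bar>" using Npos[of n] by (simp add: abs_divide diff_divide_distrib[symmetric])
      also have "\<dots> \<le> L * norm (x - y)" by (rule Flip)
      finally show ?thesis .
    qed
    show "\<bar>Gn n x\<bar> \<le> N n * (pi / 2)" for x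
    proof -
      have "\<bar>Gn n x\<bar> = N n * \<bar>arctan (F x / N n)\<bar>" unfolding Gn_def using Npos[of n] by (simp add: abs_mult)
      also have "\<dots> \<le> N n * (pi / 2)" using Npos[of n] arctan_bounded[of "F x / N n"]
        by (intro mult_left_mono) auto
      finally show ?thesis .
    qed
    show "AE x in lborel. \<exists>D. (Gn n has_derivative D) (at x) \<and> (\<forall>h. \<bar>D h\<bar> \<le> norm h)"
      using Fd
    proof eventually_elim
      case (elim x)
      then obtain D where D: "(F has_derivative D) (at x)" "\<And>h. \<bar>D h\<bar> \<le> norm h" by blast
      define c where "c = inverse (1 + (F x / N n)\<^sup>2)"
      have c: "0 < c" "c \<le> 1" unfolding c_def by (auto simp: add_pos_nonneg inverse_le_1_iff)
      have d1: "((\<lambda>y. F y / N n) has_derivative (\<lambda>h. D h / N n)) (at x)"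
        using Npos[of n] by (auto intro!: derivative_eq_intros D(1))
      have d2: "((\<lambda>y. arctan (F y / N n)) has_derivative (\<lambda>h. D h / N n * c)) (at x)"
        unfolding c_def by (rule DERIV_compose_FDERIV[OF DERIV_arctan d1])
      have d3: "(Gn n has_derivative (\<lambda>h. N n * (D h / N n * c))) (at x)"
        unfolding Gn_def[abs_def] by (rule has_derivative_mult_right[OF d2])
      have "\<bar>N n * (D h / N n * c)\<bar> \<le> norm h" for h
      proof -
        have "\<bar>N n * (D h / N n * c)\<bar> = \<bar>D h\<bar> * c" using Npos[of n] c by (simp add: abs_mult)
        also have "\<dots> \<le> \<bar>D h\<bar> * 1" using c by (intro mult_left_mono) auto
        also have "\<dots> \<le> norm h" using D(2) by simp
        finally show ?thesis .
      qed
      with d3 show ?case by blast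
    qed
  qed
  have Fg[measurable]: "F \<in> borel_measurable \<gamma>" unfolding \<gamma>_def by simp
  have Gng[measurable]: "Gn n \<in> borel_measurable \<gamma>" for n unfolding \<gamma>_def by simp
  define m where "m = (\<integral>x. F x \<partial>\<gamma>)"
  have intG: "(\<lambda>n. \<integral>x. Gn n x \<partial>\<gamma>) \<longlonglongrightarrow> m" unfolding m_def
  proof (rule integral_dominated_convergence[where w="\<lambda>x. \<bar>F x\<bar>"])
    show "integrable \<gamma> (\<lambda>x. \<bar>F x\<bar>)" using Fint unfolding \<gamma>_def by (rule integrable_abs)
    show "AE x in \<gamma>. (\<lambda>n. Gn n x) \<longlonglongrightarrow> F x" using Gn_lim by simp
    show "AE x in \<gamma>. norm (Gn n x) \<le> \<bar>F x\<bar>" for n using Gn_abs by simp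
  qed auto
  define c where "c = \<alpha> / 4"
  define l where "l = 2 * r / \<alpha>"
  have l: "l > 0" unfolding l_def using r alpha_pos by simp
  define u where "u n x = ennreal (exp (l * Gn n x))" for n x
  have um[measurable]: "u n \<in> borel_measurable \<gamma>" for n unfolding u_def by measurable
  have intexp: "integrable \<gamma> (\<lambda>x. exp (l * Gn n x))" for n
  proof (rule integrable_const_bound[where B="exp (l * (N n * (pi / 2)))"])
    show "AE x in \<gamma>. norm (exp (l * Gn n x)) \<le> exp (l * (N n * (pi / 2)))"
    proof (rule AE_I2)
      fix x
      have "\<bar>Gn n x\<bar> = N n * \<bar>arctan (F x / N n)\<bar>" unfolding Gn_def using Npos[of n] by (simp add: abs_mult)
      also have "\<dots> \<le> N n * (pi / 2)" using Npos[of n] arctan_bounded[of "F x / N n"]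
        by (intro mult_left_mono) auto
      finally have "Gn n x \<le> N n * (pi / 2)" by simp
      then show "norm (exp (l * Gn n x)) \<le> exp (l * (N n * (pi / 2)))" using l by simp
    qed
  qed simp
  define b where "b n = exp (l * (\<integral>x. Gn n x \<partial>\<gamma>) + c * l\<^sup>2)" for n
  have blim: "(\<lambda>n. ennreal (b n)) \<longlonglongrightarrow> ennreal (exp (l * m + c * l\<^sup>2))"
    unfolding b_def by (intro tendsto_intros intG)
  have fatou: "(\<integral>\<^sup>+x. ennreal (exp (l * F x)) \<partial>\<gamma>) \<le> ennreal (exp (l * m + c * l\<^sup>2))"
  proof -
    have "(\<integral>\<^sup>+x. ennreal (exp (l * F x)) \<partial>\<gamma>) = (\<integral>\<^sup>+x. liminf (\<lambda>n. u n x) \<partial>\<gamma>)"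
    proof (rule nn_integral_cong)
      fix x
      have "(\<lambda>n. u n x) \<longlonglongrightarrow> ennreal (exp (l * F x))"
        unfolding u_def by (intro tendsto_intros Gn_lim)
      then show "ennreal (exp (l * F x)) = liminf (\<lambda>n. u n x)"
        by (rule lim_imp_Liminf[symmetric, OF trivial_limit_sequentially])
    qed
    also have "\<dots> \<le> liminf (\<lambda>n. integral\<^sup>N \<gamma> (u n))"
      by (rule nn_integral_liminf) simp
    also have "\<dots> \<le> liminf (\<lambda>n. ennreal (b n))"
    proof (rule Liminf_mono[OF always_eventually], rule allI)
      fix n
      have "integral\<^sup>N \<gamma> (u n) = ennreal (\<integral>x. exp (l * Gn n x) \<partial>\<gamma>)"
        unfolding u_def by (rule nn_integral_eq_integral[OF intexp]) simp
      also have "\<dots> \<le> ennreal (b n)" unfolding b_def c_def using gb[OF l, of n]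
        by (simp add: ennreal_leI)
      finally show "integral\<^sup>N \<gamma> (u n) \<le> ennreal (b n)" .
    qed
    also have "\<dots> = ennreal (exp (l * m + c * l\<^sup>2))"
      by (rule lim_imp_Liminf[OF trivial_limit_sequentially blim])
    finally show ?thesis .
  qed
  define S where "S = {x. r \<le> F x - m}"
  have Sm[measurable]: "S \<in> sets \<gamma>" unfolding S_def \<gamma>_def by simp
  have "emeasure \<gamma> S = (\<integral>\<^sup>+x. indicator S x \<partial>\<gamma>)" using Sm by simp
  also have "\<dots> \<le> (\<integral>\<^sup>+x. ennreal (exp (- (l * (m + r)))) * ennreal (exp (l * F x)) \<partial>\<gamma>)"
  proof (rule nn_integral_mono)
    fix x
    have e: "ennreal (exp (- (l * (m + r)))) * ennreal (exp (l * F x)) = ennreal (exp (l * (F x - m - r)))"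
      by (simp add: ennreal_mult[symmetric] exp_add[symmetric] algebra_simps)
    show "indicator S x \<le> ennreal (exp (- (l * (m + r)))) * ennreal (exp (l * F x))"
    proof (cases "x \<in> S")
      case True
      then have "0 \<le> l * (F x - m - r)" using l unfolding S_def by simp
      then have "1 \<le> exp (l * (F x - m - r))" by simp
      then show ?thesis unfolding e using True by (simp add: ennreal_leI)
    next
      case False then show ?thesis by simp
    qed
  qed
  also have "\<dots> = ennreal (exp (- (l * (m + r)))) * (\<integral>\<^sup>+x. ennreal (exp (l * F x)) \<partial>\<gamma>)"
    by (rule nn_integral_cmult) simp
  also have "\<dots> \<le> ennreal (exp (- (l * (m + r)))) * ennreal (exp (l * m + c * l\<^sup>2))"
    by (rule mult_left_mono[OF fatou]) simp
  also have "\<dots> = ennreal (exp (- (r\<^sup>2 / \<alpha>)))"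
  proof -
    have "- (l * (m + r)) + (l * m + c * l\<^sup>2) = - (r\<^sup>2 / \<alpha>)"
      unfolding l_def c_def using alpha_pos by (simp add: field_simps power2_eq_square)
    then show ?thesis by (simp add: ennreal_mult[symmetric] exp_add[symmetric])
  qed
  finally have "emeasure \<gamma> S \<le> ennreal (exp (- (r\<^sup>2 / \<alpha>)))" .
  then have "measure \<gamma> S \<le> exp (- (r\<^sup>2 / \<alpha>))"
    by (simp add: emeasure_eq_measure)
  then show ?thesis unfolding S_def m_def \<gamma>_def .
qed



theorem proposition3p2:
  fixes m q F :: "'a::euclidean_space \<Rightarrow> real" and \<alpha> \<kappa> r :: real
  defines "\<mu> \<equiv> density lborel (\<lambda>x. ennreal (m x))"
      and "\<gamma> \<equiv> density lborel (\<lambda>x. ennreal (q x))"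
  assumes m_meas: "m \<in> borel_measurable borel" and m_nonneg: "\<forall>x. m x \<ge> 0"
      and q_meas: "q \<in> borel_measurable borel" and q_nonneg: "\<forall>x. q x \<ge> 0"
      and mu_prob: "prob_space \<mu>" and gamma_prob: "prob_space \<gamma>"
      and alpha_pos: "\<alpha> > 0" and lsi: "LSI \<gamma> \<alpha>"
      and kappa: "\<kappa> \<ge> 1" and dom: "\<forall>x. m x \<le> \<kappa> * q x"
      and F: "lip_grad_le F 1"
      and r: "r > 0"
  shows "measure \<mu> {x. ereal (F x - (\<integral>y. F y \<partial>\<mu>)) \<ge> ereal r + W1 \<mu> \<gamma>}
           \<le> \<kappa> * exp (- (r\<^sup>2 / \<alpha>))"
proof -
  note [measurable] = m_meas q_meas
  have kpos: "\<kappa> > 0" using kappa by simp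
  have rhs0: "0 \<le> \<kappa> * exp (- (r\<^sup>2 / \<alpha>))" using kpos by simp
  define S where "S = {x. ereal (F x - (\<integral>y. F y \<partial>\<mu>)) \<ge> ereal r + W1 \<mu> \<gamma>}"
  have Wup: "(if integrable \<mu> F \<and> integrable \<gamma> F
       then ereal \<bar>(\<integral>x. F x \<partial>\<mu>) - (\<integral>x. F x \<partial>\<gamma>)\<bar> else \<infinity>) \<le> W1 \<mu> \<gamma>"
    unfolding W1_def by (rule SUP_upper) (use F in simp)
  show ?thesis
  proof (cases "integrable \<mu> F \<and> integrable \<gamma> F \<and> W1 \<mu> \<gamma> \<noteq> \<infinity>")
    case False
    then have "W1 \<mu> \<gamma> = \<infinity>" using Wup by (auto split: if_splits)
    then have "S = {}" unfolding S_def by auto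
    then show ?thesis unfolding S_def[symmetric] using rhs0 by simp
  next
    case True
    then have iF: "integrable \<mu> F" "integrable \<gamma> F" and Wf: "W1 \<mu> \<gamma> \<noteq> \<infinity>" by auto
    define mu where "mu = (\<integral>x. F x \<partial>\<mu>)"
    define ga where "ga = (\<integral>x. F x \<partial>\<gamma>)"
    have W: "ereal \<bar>mu - ga\<bar> \<le> W1 \<mu> \<gamma>" using Wup iF unfolding mu_def ga_def by simp
    then obtain w where w: "W1 \<mu> \<gamma> = ereal w" using Wf by (cases "W1 \<mu> \<gamma>") auto
    have wge: "\<bar>mu - ga\<bar> \<le> w" using W w by simp
    define T where "T = {x. r \<le> F x - ga}"
    have ST: "S \<subseteq> T"
    proof
      fix x assume "x \<in> S"
      then have "F x - mu \<ge> r + w" unfolding S_def mu_def w by simp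
      moreover have "- (mu - ga) \<le> w" using wge by (rule abs_le_D2)
      ultimately have "r \<le> F x - ga" by linarith
      then show "x \<in> T" unfolding T_def by simp
    qed
    obtain L where Lip: "L-lipschitz_on UNIV F" using F unfolding lip_grad_le_def by blast
    have cF: "continuous_on UNIV F" by (rule lipschitz_on_continuous_on[OF Lip])
    have Fm[measurable]: "F \<in> borel_measurable borel" by (rule borel_measurable_continuous_onI[OF cF])
    have Tm: "T \<in> sets borel" unfolding T_def by measurable
    have Tmu: "T \<in> sets \<mu>" using Tm unfolding \<mu>_def by simp
    have Tga: "T \<in> sets \<gamma>" using Tm unfolding \<gamma>_def by simp
    have Sm: "S \<in> sets \<mu>" unfolding S_def \<mu>_def by measurable
    interpret M: prob_space \<mu> by (rule mu_prob)
    interpret Q: prob_space \<gamma> by (rule gamma_prob)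
    have "measure \<mu> S \<le> measure \<mu> T" by (rule M.finite_measure_mono[OF ST Tmu])
    also have "measure \<mu> T \<le> \<kappa> * measure \<gamma> T"
    proof -
      have "emeasure \<mu> T = (\<integral>\<^sup>+x. ennreal (m x) * indicator T x \<partial>lborel)"
        unfolding \<mu>_def by (rule emeasure_density) (use Tm in auto)
      also have "\<dots> \<le> (\<integral>\<^sup>+x. ennreal \<kappa> * (ennreal (q x) * indicator T x) \<partial>lborel)"
      proof (rule nn_integral_mono)
        fix x
        have "ennreal (m x) \<le> ennreal \<kappa> * ennreal (q x)"
          using dom kpos by (simp add: ennreal_mult[symmetric] ennreal_leI q_nonneg)
        then show "ennreal (m x) * indicator T x \<le> ennreal \<kappa> * (ennreal (q x) * indicator T x)"
          by (auto simp: indicator_def)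
      qed
      also have "\<dots> = ennreal \<kappa> * (\<integral>\<^sup>+x. ennreal (q x) * indicator T x \<partial>lborel)"
        by (rule nn_integral_cmult) (use Tm in auto)
      also have "\<dots> = ennreal \<kappa> * emeasure \<gamma> T"
        unfolding \<gamma>_def by (subst emeasure_density) (use Tm in auto)
      finally have "ennreal (measure \<mu> T) \<le> ennreal (\<kappa> * measure \<gamma> T)"
        using kpos by (simp add: M.emeasure_eq_measure Q.emeasure_eq_measure ennreal_mult)
      then show ?thesis using kpos by (simp add: ennreal_le_iff)
    qed
    also have "\<kappa> * measure \<gamma> T \<le> \<kappa> * exp (- (r\<^sup>2 / \<alpha>))"
    proof (rule mult_left_mono)
      show "measure \<gamma> T \<le> exp (- (r\<^sup>2 / \<alpha>))"
        unfolding T_def ga_def \<gamma>_def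
        by (rule concentration[OF q_meas gamma_prob[unfolded \<gamma>_def] lsi[unfolded \<gamma>_def] alpha_pos F
              iF(2)[unfolded \<gamma>_def] r])
    qed (use kpos in simp)
    finally show ?thesis unfolding S_def .
  qed
qed


end
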